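(* Let $X^{(1)},\dots,X^{(n)}$ be i.i.d. random vectors in $\mathbb{R}^p$ from an absolutely continuous distribution, and let $S_{0,n}=\frac1n\sum_{s=1}^n X^{(s)}(X^{(s)})^T$. If $n<p$, then almost surely the kernel of $S_{0,n}$ contains a vector $q\in\mathbb{R}^p$ all of whose coordinates are nonzero. *)

theory Defs
  imports "HOL-Probability.Probability"
begin

definition outer_prod :: "real ^ 'p \<Rightarrow> real ^ 'p \<Rightarrow> real ^ 'p ^ 'p" where
  "outer_prod x y = (\<chi> i j. x $ i * y $ j)"

definition sample_S0 :: "nat \<Rightarrow> (nat \<Rightarrow> real ^ 'p) \<Rightarrow> real ^ 'p ^ 'p" where
  "sample_S0 n x = (1 / real n) *\<^sub>R (\<Sum>s\<in>{1..n}. outer_prod (x s) (x s))"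

end

theory Submission
  imports Defs
begin


lemma S0_kernel:
  fixes x :: "nat \<Rightarrow> real ^ 'p" and q :: "real ^ 'p"
  assumes "\<forall>s\<in>{1..n}. x s \<bullet> q = 0"
  shows "sample_S0 n x *v q = 0"
proof -
  have "(sample_S0 n x *v q) $ a = 0" for a
  proof -
    have "(sample_S0 n x *v q) $ a = (1 / real n) * (\<Sum>j\<in>UNIV. (\<Sum>s\<in>{1..n}. x s $ a * x s $ j) * q $ j)"
      by (simp add: sample_S0_def outer_prod_def matrix_vector_mult_def sum_component sum_distrib_left sum_divide_distrib[symmetric])
    also have "\<dots> = (1 / real n) * (\<Sum>s\<in>{1..n}. x s $ a * (x s \<bullet> q))"
      by (simp add: inner_vec_def sum_distrib_left sum_distrib_right mult.assoc sum.swap[of _ UNIV])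
    also have "\<dots> = 0" using assms by simp
    finally show ?thesis .
  qed
  then show ?thesis by (simp add: vec_eq_iff)
qed

lemma witness_i:
  fixes x :: "nat \<Rightarrow> real ^ 'p"
  assumes "axis i 1 \<notin> span (x ` {1..n})"
  shows "\<exists>w. (\<forall>s\<in>{1..n}. x s \<bullet> w = 0) \<and> w $ i \<noteq> 0"
proof -
  obtain y z where y: "y \<in> span (x ` {1..n})" and z: "\<And>w. w \<in> span (x ` {1..n}) \<Longrightarrow> orthogonal z w"
    and e: "axis i 1 = y + z"
    using orthogonal_subspace_decomp_exists by blast
  have "z \<noteq> 0" using y e assms by auto
  have "z $ i = z \<bullet> axis i 1" by (simp add: inner_axis)
  also have "\<dots> = z \<bullet> z" using z[OF y] by (simp add: e inner_add_right orthogonal_def)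
  finally have "z $ i \<noteq> 0" using \<open>z \<noteq> 0\<close> by simp
  moreover have "\<forall>s\<in>{1..n}. x s \<bullet> z = 0"
    proof
      fix s assume "s \<in> {1..n}"
      then have "orthogonal z (x s)" using z by (intro z span_base imageI)
      then show "x s \<bullet> z = 0" by (simp add: orthogonal_def inner_commute)
    qed
  ultimately show ?thesis by blast
qed

lemma combine:
  fixes x :: "nat \<Rightarrow> real ^ 'p"
  assumes "\<forall>i. \<exists>w. (\<forall>s\<in>{1..n}. x s \<bullet> w = 0) \<and> w $ i \<noteq> 0"
  shows "\<exists>q. (\<forall>s\<in>{1..n}. x s \<bullet> q = 0) \<and> (\<forall>i. q $ i \<noteq> 0)"
proof -
  have "finite I \<Longrightarrow> \<exists>q. (\<forall>s\<in>{1..n}. x s \<bullet> q = 0) \<and> (\<forall>i\<in>I. q $ i \<noteq> 0)" for I :: "'p set"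
  proof (induction I rule: finite_induct)
    case empty then show ?case by (intro exI[of _ 0]) simp
  next
    case (insert j I)
    then obtain q where q: "\<forall>s\<in>{1..n}. x s \<bullet> q = 0" "\<forall>i\<in>I. q $ i \<noteq> 0" by blast
    obtain w where w: "\<forall>s\<in>{1..n}. x s \<bullet> w = 0" "w $ j \<noteq> 0" using assms by blast
    have "finite (insert 0 ((\<lambda>i. - q $ i / w $ i) ` I \<union> {- q $ j / w $ j}))" using insert by simp
    then obtain t :: real where t: "t \<notin> insert 0 ((\<lambda>i. - q $ i / w $ i) ` I \<union> {- q $ j / w $ j})"
      using ex_new_if_finite[OF infinite_UNIV_char_0] by blast
    have "(q + t *\<^sub>R w) $ i \<noteq> 0" if "i \<in> insert j I" for i
    proof
      assume h: "(q + t *\<^sub>R w) $ i = 0"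
      show False
      proof (cases "w $ i = 0")
        case True then show False using h that q w by auto
      next
        case False
        then have "t = - q $ i / w $ i" using h by (simp add: field_simps)
        then show False using t that by auto
      qed
    qed
    moreover have "\<forall>s\<in>{1..n}. x s \<bullet> (q + t *\<^sub>R w) = 0" using q w by (simp add: inner_add_right)
    ultimately show ?case by blast
  qed
  from this[of UNIV] show ?thesis by simp
qed



definition comb :: "'v::real_vector \<Rightarrow> nat set \<Rightarrow> rat list \<Rightarrow> (nat \<Rightarrow> 'v) \<Rightarrow> 'v" where
  "comb e K l y = of_rat (l!0) *\<^sub>R e + (\<Sum>s\<in>K. of_rat (l!s) *\<^sub>R y s)"

lemma span_repr:
  fixes e :: "'v::real_vector"
  assumes "z \<in> span (insert e (y ` K))" "0 \<notin> K" "finite K"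
  shows "\<exists>a. z = a 0 *\<^sub>R e + (\<Sum>s\<in>K. a s *\<^sub>R y s)"
  using assms(1)
proof (induction rule: span_induct_alt)
  case base
  show ?case by (intro exI[of _ "\<lambda>_. 0"]) simp
next
  case (step c x w)
  then obtain a where a: "w = a 0 *\<^sub>R e + (\<Sum>s\<in>K. a s *\<^sub>R y s)" by blast
  from step(1) show ?case
  proof
    assume "x = e"
    then show ?thesis using a
      by (intro exI[of _ "a(0 := a 0 + c)"])
         (auto simp: scaleR_add_left assms(2) intro!: sum.cong)
  next
    assume "x \<in> y ` K"
    then obtain t where t: "t \<in> K" "x = y t" by blast
    have "t \<noteq> 0" using t assms(2) by auto
    let ?a = "\<lambda>s. a s + (if s = t then c else 0)"
    have "(\<Sum>s\<in>K. ?a s *\<^sub>R y s) = (\<Sum>s\<in>K. a s *\<^sub>R y s) + (\<Sum>s\<in>K. (if s = t then c *\<^sub>R y s else 0))"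
      by (subst sum.distrib[symmetric]) (auto intro!: sum.cong simp: scaleR_add_left)
    also have "(\<Sum>s\<in>K. (if s = t then c *\<^sub>R y s else 0)) = c *\<^sub>R y t"
      using t(1) assms(3) by (simp add: sum.delta)
    finally show ?thesis using a t \<open>t \<noteq> 0\<close>
      by (intro exI[of _ ?a]) (simp add: algebra_simps)
  qed
qed

lemma approx_comb:
  fixes e :: "'v::real_normed_vector"
  assumes "z \<in> span (insert e (y ` K))" "0 \<notin> K" "finite K" "\<forall>s\<in>K. s < m" "0 < m" "\<epsilon> > 0"
  shows "\<exists>l. norm (z - comb e K l y) < \<epsilon>"
proof -
  obtain a where a: "z = a 0 *\<^sub>R e + (\<Sum>s\<in>K. a s *\<^sub>R y s)" using span_repr assms by blast
  define B where "B = 1 + norm e + (\<Sum>s\<in>K. norm (y s))"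
  have B0: "B > 0" unfolding B_def by (simp add: add_pos_nonneg sum_nonneg)
  define \<delta> where "\<delta> = \<epsilon> / B"
  have d0: "\<delta> > 0" using B0 assms by (simp add: \<delta>_def)
  have "\<forall>s. \<exists>r::rat. \<bar>a s - of_rat r\<bar> < \<delta>"
  proof
    fix s
    obtain r where "r \<in> \<rat>" "a s < r" "r < a s + \<delta>" using Rats_dense_in_real[of "a s" "a s + \<delta>"] d0 by auto
    then obtain q where "r = of_rat q" by (auto elim: Rats_cases)
    then show "\<exists>r::rat. \<bar>a s - of_rat r\<bar> < \<delta>" using \<open>a s < r\<close> \<open>r < a s + \<delta>\<close>
      by (intro exI[of _ q]) (simp add: abs_less_iff)
  qed
  then obtain R where R: "\<And>s. \<bar>a s - of_rat (R s)\<bar> < \<delta>" by metis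
  define l where "l = map R [0..<m]"
  have ls: "\<And>s. s < m \<Longrightarrow> l ! s = R s" by (simp add: l_def)
  have "z - comb e K l y = (a 0 - of_rat (R 0)) *\<^sub>R e + (\<Sum>s\<in>K. (a s - of_rat (R s)) *\<^sub>R y s)"
  proof -
    have "comb e K l y = of_rat (R 0) *\<^sub>R e + (\<Sum>s\<in>K. of_rat (R s) *\<^sub>R y s)"
      unfolding comb_def using ls assms(4,5) by (auto intro!: sum.cong)
    then show ?thesis by (simp add: a scaleR_diff_left sum_subtractf)
  qed
  also have "norm \<dots> \<le> \<bar>a 0 - of_rat (R 0)\<bar> * norm e + (\<Sum>s\<in>K. \<bar>a s - of_rat (R s)\<bar> * norm (y s))"
    by (rule order_trans[OF norm_triangle_ineq]) (auto intro!: add_mono order_trans[OF norm_sum] sum_mono)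
  also have "\<dots> \<le> \<delta> * norm e + (\<Sum>s\<in>K. \<delta> * norm (y s))"
    using R by (intro add_mono sum_mono mult_right_mono) (auto intro: less_imp_le)
  also have "\<dots> < \<delta> * B" using d0 by (simp add: B_def algebra_simps sum_distrib_left)
  also have "\<dots> = \<epsilon>" using B0 by (simp add: \<delta>_def)
  finally show ?thesis by blast
qed

lemma comb_in_span: "comb e K l y \<in> span (insert e (y ` K))"
  unfolding comb_def
  by (intro span_add span_scale span_sum span_base) auto

lemma limit_in_span:
  fixes e :: "'v::euclidean_space"
  assumes "\<forall>j::nat. \<exists>l. norm (z - comb e K l y) < 1 / real (Suc j)"
  shows "z \<in> span (insert e (y ` K))"
proof -
  have "z \<in> closure (span (insert e (y ` K)))"
    unfolding closure_approachable
  proof (intro allI impI)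
    fix \<epsilon> :: real assume "\<epsilon> > 0"
    then obtain j where j: "1 / real (Suc j) < \<epsilon>" using nat_approx_posE by blast
    obtain l where "norm (z - comb e K l y) < 1 / real (Suc j)" using assms by blast
    then show "\<exists>w\<in>span (insert e (y ` K)). dist w z < \<epsilon>"
      using j comb_in_span[of e K l y] by (intro bexI[of _ "comb e K l y"]) (auto simp: dist_norm norm_minus_commute)
  qed
  then show ?thesis by simp
qed



lemma (in prob_space) step_null:
  fixes X :: "nat \<Rightarrow> 'a \<Rightarrow> real ^ 'p" and e :: "real ^ 'p"
  assumes meas: "\<forall>s\<in>{1..n}. X s \<in> borel_measurable M"
    and ind: "indep_vars (\<lambda>_. borel) X {1..n}"
    and dist: "distr M borel (X k) = \<mu>"
    and ac: "absolutely_continuous lborel \<mu>"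
    and k: "k \<in> {1..n}" and np: "n < CARD('p)"
  shows "AE \<omega> in M. X k \<omega> \<notin> span (insert e ((\<lambda>s. X s \<omega>) ` {1..<k}))"
proof -
  define K where "K = {1..<k}"
  define Y where "Y = (\<lambda>\<omega>. restrict (\<lambda>s. X s \<omega>) K)"
  define Z where "Z = (\<lambda>\<omega>. restrict (\<lambda>s. X s \<omega>) {k})"
  define MK where "MK = PiM K (\<lambda>_. borel :: (real^'p) measure)"
  define Mk where "Mk = PiM {k} (\<lambda>_. borel :: (real^'p) measure)"
  have Xk: "X k \<in> borel_measurable M" using meas k by auto
  have iv: "indep_var MK Y Mk Z"
    unfolding Y_def Z_def MK_def Mk_def using k by (intro indep_var_restrict[OF ind]) (auto simp: K_def)
  then have Ym: "Y \<in> measurable M MK" and Zm: "Z \<in> measurable M Mk"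
    and joint: "distr M MK Y \<Otimes>\<^sub>M distr M Mk Z = distr M (MK \<Otimes>\<^sub>M Mk) (\<lambda>\<omega>. (Y \<omega>, Z \<omega>))"
    unfolding indep_var_distribution_eq by auto
  define P where "P = (\<lambda>y z. \<forall>j::nat. \<exists>l::rat list. norm (z - comb e K l y) < 1 / real (Suc j))"
  define G where "G = {yz \<in> space (MK \<Otimes>\<^sub>M Mk). P (fst yz) (snd yz k)}"
  have G: "G \<in> sets (MK \<Otimes>\<^sub>M Mk)"
    unfolding G_def P_def comb_def K_def MK_def Mk_def by measurable
  have Kfin: "finite K" and K0: "0 \<notin> K" and Kk: "\<forall>s\<in>K. s < k" and k0: "0 < k"
    using k by (auto simp: K_def)
  have Sz: "span (insert e (y ` K)) \<in> null_sets \<mu>" for y :: "nat \<Rightarrow> real^'p"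
  proof -
    let ?S = "span (insert e (y ` K))"
    have "card (insert e (y ` K)) \<le> Suc (card (y ` K))" by (simp add: card_insert_le_m1 card_insert_if)
    also have "\<dots> \<le> Suc (card K)" using card_image_le[OF Kfin] by simp
    also have "\<dots> = k" using k by (simp add: K_def)
    finally have "dim ?S \<le> k" using dim_le_card[of ?S "insert e (y ` K)"] Kfin by simp
    then have "dim ?S < DIM(real^'p)" using k np by simp
    then have "negligible ?S" by (rule negligible_lowdim)
    then have "?S \<in> null_sets lebesgue" by (simp add: negligible_iff_null_sets)
    then have "?S \<in> null_sets lborel"
      by (subst null_sets_completion_iff[symmetric]) (auto simp: borel_closed)
    then show ?thesis using ac by (auto simp: absolutely_continuous_def)
  qed
  have mS: "{f \<in> space Mk. f k \<in> span (insert e (y ` K))} \<in> sets Mk" for y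
  proof -
    have Sb: "span (insert e (y ` K)) \<in> sets borel" by (simp add: borel_closed)
    show ?thesis unfolding Mk_def using Sb by measurable
  qed
  have Zsl: "emeasure (distr M Mk Z) {f \<in> space Mk. f k \<in> span (insert e (y ` K))} = 0" for y
  proof -
    let ?S = "span (insert e (y ` K))"
    have Sb: "?S \<in> sets borel" by (simp add: borel_closed)
    have m: "{f \<in> space Mk. f k \<in> ?S} \<in> sets Mk" unfolding Mk_def using Sb by measurable
    have "emeasure (distr M Mk Z) {f \<in> space Mk. f k \<in> ?S} = emeasure M (Z -` {f \<in> space Mk. f k \<in> ?S} \<inter> space M)"
      by (rule emeasure_distr[OF Zm m])
    also have "Z -` {f \<in> space Mk. f k \<in> ?S} \<inter> space M = X k -` ?S \<inter> space M"
      using measurable_space[OF Zm] by (auto simp: Z_def)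
    also have "emeasure M \<dots> = emeasure \<mu> ?S"
      using emeasure_distr[OF Xk Sb] dist by simp
    also have "\<dots> = 0" using Sz[of y] by auto
    finally show ?thesis .
  qed
  have sigZ: "sigma_finite_measure (distr M Mk Z)"
    by (rule prob_space_imp_sigma_finite[OF prob_space_distr[OF Zm]])
  have Gs: "G \<in> sets (distr M MK Y \<Otimes>\<^sub>M distr M Mk Z)" using G
    by (simp cong: sets_pair_measure_cong)
  have "emeasure M ((\<lambda>\<omega>. (Y \<omega>, Z \<omega>)) -` G \<inter> space M) = emeasure (distr M (MK \<Otimes>\<^sub>M Mk) (\<lambda>\<omega>. (Y \<omega>, Z \<omega>))) G"
    by (rule emeasure_distr[symmetric]) (use Ym Zm G in auto)
  also have "\<dots> = emeasure (distr M MK Y \<Otimes>\<^sub>M distr M Mk Z) G" using joint by simp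
  also have "\<dots> = (\<integral>\<^sup>+y. emeasure (distr M Mk Z) (Pair y -` G) \<partial>distr M MK Y)"
    by (rule sigma_finite_measure.emeasure_pair_measure_alt[OF sigZ Gs])
  also have "\<dots> = (\<integral>\<^sup>+y. 0 \<partial>distr M MK Y)"
  proof (rule nn_integral_cong)
    fix y
    have sub: "Pair y -` G \<subseteq> {f \<in> space Mk. f k \<in> span (insert e (y ` K))}"
      unfolding G_def using limit_in_span[of z e K y for z] by (auto simp: P_def space_pair_measure)
    have "Pair y -` G \<in> sets (distr M Mk Z)" using sets_Pair1[OF G] by simp
    moreover have "{f \<in> space Mk. f k \<in> span (insert e (y ` K))} \<in> null_sets (distr M Mk Z)"
      using Zsl[of y] mS[of y] by (auto intro!: null_setsI)
    ultimately have "Pair y -` G \<in> null_sets (distr M Mk Z)" using sub null_sets_subset by blast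
    then show "emeasure (distr M Mk Z) (Pair y -` G) = 0" by auto
  qed
  also have "\<dots> = 0" by simp
  finally have N: "(\<lambda>\<omega>. (Y \<omega>, Z \<omega>)) -` G \<inter> space M \<in> null_sets M"
    using G Ym Zm by (auto intro!: null_setsI measurable_sets)
  show ?thesis
  proof (rule AE_I'[OF N], safe)
    fix \<omega> assume \<omega>: "\<omega> \<in> space M" and sp: "X k \<omega> \<in> span (insert e ((\<lambda>s. X s \<omega>) ` {1..<k}))"
    have img: "Y \<omega> ` K = (\<lambda>s. X s \<omega>) ` K" by (auto simp: Y_def)
    have "P (Y \<omega>) (X k \<omega>)" unfolding P_def
    proof
      fix j :: nat
      show "\<exists>l. norm (X k \<omega> - comb e K l (Y \<omega>)) < 1 / real (Suc j)"
        by (rule approx_comb) (use sp img Kfin K0 Kk k0 in \<open>auto simp: K_def\<close>)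
    qed
    moreover have "(Y \<omega>, Z \<omega>) \<in> space (MK \<Otimes>\<^sub>M Mk)"
      using measurable_space[OF Ym \<omega>] measurable_space[OF Zm \<omega>] by (simp add: space_pair_measure)
    ultimately show "\<omega> \<in> (\<lambda>\<omega>. (Y \<omega>, Z \<omega>)) -` G" by (simp add: G_def Z_def)
  qed
qed


lemma not_in_span_chain:
  fixes x :: "nat \<Rightarrow> 'v::real_vector"
  assumes "\<forall>k\<in>{1..n}. x k \<notin> span (insert e (x ` {1..<k}))" "e \<noteq> 0"
  shows "e \<notin> span (x ` {1..n})"
proof -
  have "m \<le> n \<Longrightarrow> e \<notin> span (x ` {1..m})" for m
  proof (induction m)
    case 0 then show ?case using assms(2) by simp
  next
    case (Suc m)
    then have IH: "e \<notin> span (x ` {1..m})" by simp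
    have eq: "x ` {1..Suc m} = insert (x (Suc m)) (x ` {1..m})"
      by (auto simp: atLeastAtMostSuc_conv)
    have nx: "x (Suc m) \<notin> span (insert e (x ` {1..m}))"
      using assms(1) Suc.prems by (auto simp: atLeastLessThanSuc_atLeastAtMost[symmetric])
    show ?case
    proof
      assume "e \<in> span (x ` {1..Suc m})"
      then have "x (Suc m) \<in> span (insert e (x ` {1..m}))"
        using in_span_insert IH eq by metis
      then show False using nx by simp
    qed
  qed
  then show ?thesis by simp
qed

theorem lemma6:
  fixes M :: "'a measure" and X :: "nat \<Rightarrow> 'a \<Rightarrow> real ^ 'p"
    and \<mu> :: "(real ^ 'p) measure" and n :: nat
  assumes "prob_space M"
    and "\<forall>s\<in>{1..n}. X s \<in> borel_measurable M"
    and "prob_space.indep_vars M (\<lambda>_. borel) X {1..n}"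
    and "\<forall>s\<in>{1..n}. distr M borel (X s) = \<mu>"
    and "absolutely_continuous lborel \<mu>"
    and "n < CARD('p)"
  shows "AE \<omega> in M. \<exists>q :: real ^ 'p.
           sample_S0 n (\<lambda>s. X s \<omega>) *v q = 0 \<and> (\<forall>i. q $ i \<noteq> 0)"
proof -
  interpret prob_space M by fact
  have "AE \<omega> in M. \<forall>i\<in>UNIV. \<forall>k\<in>{1..n}. X k \<omega> \<notin> span (insert (axis i 1) ((\<lambda>s. X s \<omega>) ` {1..<k}))"
    by (intro AE_finite_allI finite_UNIV finite_atLeastAtMost step_null[where \<mu>=\<mu> and n=n])
       (use assms in auto)
  then show ?thesis
  proof (rule eventually_mono)
    fix \<omega> assume h: "\<forall>i\<in>UNIV. \<forall>k\<in>{1..n}. X k \<omega> \<notin> span (insert (axis i 1) ((\<lambda>s. X s \<omega>) ` {1..<k}))"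
    have "\<forall>i. axis i (1::real) \<notin> span ((\<lambda>s. X s \<omega>) ` {1..n})"
    proof
      fix i :: 'p
      show "axis i (1::real) \<notin> span ((\<lambda>s. X s \<omega>) ` {1..n})"
        by (rule not_in_span_chain) (use h in \<open>auto simp: axis_eq_0_iff\<close>)
    qed
    then have "\<forall>i. \<exists>w. (\<forall>s\<in>{1..n}. X s \<omega> \<bullet> w = 0) \<and> w $ i \<noteq> 0"
      using witness_i[of _ "\<lambda>s. X s \<omega>"] by blast
    then obtain q where "\<forall>s\<in>{1..n}. X s \<omega> \<bullet> q = 0" "\<forall>i. q $ i \<noteq> 0"
      using combine[of n "\<lambda>s. X s \<omega>"] by blast
    then show "\<exists>q :: real ^ 'p. sample_S0 n (\<lambda>s. X s \<omega>) *v q = 0 \<and> (\<forall>i. q $ i \<noteq> 0)"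
      using S0_kernel[of n "\<lambda>s. X s \<omega>" q] by blast
  qed
qed

end
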